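(* For all $t\ge1$ and all $\mathbf{x}\in\mathcal{X}$, \[ \frac{\sigma_{\mathrm{fb}[t]}(\mathbf{x})}{\sigma_{t-1}(\mathbf{x})}\le e^{C}. \]
   Context: $\mathcal{X}$ is a finite subset of the unit ball; $f\sim\mathcal{GP}(0,k)$; noisy observations with noise $\mathcal{N}(0,\sigma^2)$. Queries $\mathbf{x}_1,\mathbf{x}_2,\dots$ are chosen in batches of size $B$ and indexed sequentially; $\mathrm{fb}[t]$ is the largest index whose observation is available when $\mathbf{x}_t$ is chosen, with $t-\mathrm{fb}[t]\le B$. $\sigma_{\mathrm{fb}[t]}(\mathbf{x})$ is the GP posterior standard deviation at $\mathbf{x}$ given the queries $1,\dots,\mathrm{fb}[t]$, and $\sigma_{t-1}(\mathbf{x})$ that given the queries $1,\dots,t-1$. $C$ is a constant with $\max_{A\subset\mathcal{X},|A|\le B-1}\mathbb{I}(f;\mathbf{y}_A\mid\mathbf{y}_{1:\mathrm{fb}[t]})\le C$ for all $t\ge1$, where $\mathbf{y}_A$ are noisy observations at $A$, $\mathbf{y}_{1:\mathrm{fb}[t]}$ the observations with indices $1,\dots,\mathrm{fb}[t]$, and $\mathbb{I}$ mutual information. *)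

theory Defs
  imports Complex_Main "Jordan_Normal_Form.Determinant" "Jordan_Normal_Form.Gauss_Jordan_Elimination"
begin

definition gram :: "('a \<Rightarrow> 'a \<Rightarrow> real) \<Rightarrow> 'a list \<Rightarrow> real mat" where
  "gram k D = mat (length D) (length D) (\<lambda>(i,j). k (D ! i) (D ! j))"

definition kvec :: "('a \<Rightarrow> 'a \<Rightarrow> real) \<Rightarrow> 'a list \<Rightarrow> 'a \<Rightarrow> real vec" where
  "kvec k D x = vec (length D) (\<lambda>i. k (D ! i) x)"

definition post_cov :: "('a \<Rightarrow> 'a \<Rightarrow> real) \<Rightarrow> real \<Rightarrow> 'a list \<Rightarrow> 'a \<Rightarrow> 'a \<Rightarrow> real" where
  "post_cov k s2 D x y =
     k x y - kvec k D x \<bullet> (the (mat_inverse (gram k D + s2 \<cdot>\<^sub>m 1\<^sub>m (length D))) *\<^sub>v kvec k D y)"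

definition post_sd :: "('a \<Rightarrow> 'a \<Rightarrow> real) \<Rightarrow> real \<Rightarrow> 'a list \<Rightarrow> 'a \<Rightarrow> real" where
  "post_sd k s2 D x = sqrt (post_cov k s2 D x x)"

definition queries :: "(nat \<Rightarrow> 'a) \<Rightarrow> nat \<Rightarrow> 'a list" where
  "queries xs n = map xs [1..<Suc n]"

text \<open>Conditional mutual information I(f; y_A | y_D) for the GP model with Gaussian
  noise of variance s2 (closed form for jointly Gaussian variables, natural log):
  1/2 log det (I + s2^{-1} K_A^{(D)}), with K_A^{(D)} the posterior covariance matrix on A.\<close>
definition cond_mi :: "('a \<Rightarrow> 'a \<Rightarrow> real) \<Rightarrow> real \<Rightarrow> 'a list \<Rightarrow> 'a list \<Rightarrow> real" where
  "cond_mi k s2 A D =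
     ln (det (1\<^sub>m (length A) + (1 / s2) \<cdot>\<^sub>m
          mat (length A) (length A) (\<lambda>(i,j). post_cov k s2 D (A ! i) (A ! j)))) / 2"

definition psd_kernel :: "'a set \<Rightarrow> ('a \<Rightarrow> 'a \<Rightarrow> real) \<Rightarrow> bool" where
  "psd_kernel X k \<longleftrightarrow> (\<forall>x\<in>X. \<forall>y\<in>X. k x y = k y x) \<and>
     (\<forall>P c. set P \<subseteq> X \<longrightarrow>
        (\<Sum>i<length P. \<Sum>j<length P. c i * c j * k (P ! i) (P ! j)) \<ge> 0)"

end

theory Submission imports Defs begin

lemma schur_first:
  fixes f :: "nat \<times> nat \<Rightarrow> real"
  assumes a0: "f (0,0) \<noteq> 0"
  shows "det (mat (Suc n) (Suc n) f) =
    f (0,0) * det (mat n n (\<lambda>(i,j). f (Suc i, Suc j) - f (Suc i, 0) * f (0, Suc j) / f (0,0)))"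
proof -
  define \<alpha> where "\<alpha> = f (0,0)"
  define M where "M = mat (Suc n) (Suc n) f"
  define S where "S = mat n n (\<lambda>(i,j). f (Suc i, Suc j) - f (Suc i, 0) * f (0, Suc j) / f (0,0))"
  define E where "E = mat (Suc n) (Suc n) (\<lambda>(i,j). if i = j then 1 else if j = 0 then - f (i,0) / \<alpha> else 0)"
  have Ec: "E \<in> carrier_mat (Suc n) (Suc n)" and Mc: "M \<in> carrier_mat (Suc n) (Suc n)"
    unfolding E_def M_def by auto
  have detE: "det E = 1"
  proof -
    have "det E = prod_list (diag_mat E)"
      by (rule det_lower_triangular[OF _ Ec]) (auto simp: E_def)
    also have "diag_mat E = map (\<lambda>_. 1) [0..<Suc n]"
      unfolding diag_mat_def using Ec by (intro map_cong) (auto simp: E_def)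
    also have "prod_list (map (\<lambda>_. 1::real) [0..<Suc n]) = 1"
      by (induct n) auto
    finally show ?thesis .
  qed
  have EM: "E * M = four_block_mat (mat 1 1 (\<lambda>_. \<alpha>)) (mat 1 n (\<lambda>(_,j). f (0, Suc j))) (0\<^sub>m n 1) S"
  proof (rule eq_matI)
    fix i j assume i: "i < dim_row (four_block_mat (mat 1 1 (\<lambda>_. \<alpha>)) (mat 1 n (\<lambda>(_,j). f (0, Suc j))) (0\<^sub>m n 1) S)"
      and j: "j < dim_col (four_block_mat (mat 1 1 (\<lambda>_. \<alpha>)) (mat 1 n (\<lambda>(_,j). f (0, Suc j))) (0\<^sub>m n 1) S)"
    have i': "i < Suc n" and j': "j < Suc n" using i j by (auto simp: S_def)
    have "(E * M) $$ (i,j) = (\<Sum>k<Suc n. E $$ (i,k) * f (k,j))"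
      using i' j' by (simp add: E_def M_def scalar_prod_def atLeast0LessThan row_def col_def)
    also have "\<dots> = (if i = 0 then f (0,j) else f (i,j) - f (i,0) / \<alpha> * f (0,j))"
    proof (cases "i = 0")
      case True
      have "(\<Sum>k<Suc n. E $$ (i,k) * f (k,j)) = (\<Sum>k<Suc n. (if k = 0 then f (0,j) else 0))"
        by (rule sum.cong) (use True in \<open>auto simp: E_def\<close>)
      then show ?thesis using True by simp
    next
      case False
      have "(\<Sum>k<Suc n. E $$ (i,k) * f (k,j)) = (\<Sum>k<Suc n. (if k = i then f (i,j) else 0) + (if k = 0 then - f (i,0) / \<alpha> * f (0,j) else 0))"
        by (rule sum.cong) (use False i' in \<open>auto simp: E_def\<close>)
      also have "\<dots> = f (i,j) - f (i,0) / \<alpha> * f (0,j)"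
        using i' by (simp add: sum.distrib)
      finally show ?thesis using False by simp
    qed
    also have "\<dots> = four_block_mat (mat 1 1 (\<lambda>_. \<alpha>)) (mat 1 n (\<lambda>(_,j). f (0, Suc j))) (0\<^sub>m n 1) S $$ (i,j)"
      using i' j' a0 by (auto simp: S_def \<alpha>_def four_block_mat_def field_simps)
    finally show "(E * M) $$ (i,j) = four_block_mat (mat 1 1 (\<lambda>_. \<alpha>)) (mat 1 n (\<lambda>(_,j). f (0, Suc j))) (0\<^sub>m n 1) S $$ (i,j)" .
  qed (auto simp: E_def M_def S_def)
  have "det M = det (E * M)" using det_mult[OF Ec Mc] detE by simp
  also have "\<dots> = det (mat 1 1 (\<lambda>_. \<alpha>)) * det S"
    unfolding EM by (rule det_four_block_mat_lower_left_zero_col) (auto simp: S_def)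
  also have "det (mat 1 1 (\<lambda>_. \<alpha>)) = \<alpha>"
    by (simp add: det_def)
  finally show ?thesis by (simp add: M_def S_def \<alpha>_def)
qed

lemma mulv_idx:
  assumes "i < dim_row A" "v \<in> carrier_vec (dim_col A)"
  shows "(A *\<^sub>v v) $ i = (\<Sum>j<dim_col A. A $$ (i,j) * v $ j)"
  using assms by (auto simp: scalar_prod_def atLeast0LessThan intro!: sum.cong)

definition Kmat :: "('a \<Rightarrow> 'a \<Rightarrow> real) \<Rightarrow> real \<Rightarrow> 'a list \<Rightarrow> real mat" where
  "Kmat k s2 D = gram k D + s2 \<cdot>\<^sub>m 1\<^sub>m (length D)"

lemma Kmat_carrier: "Kmat k s2 D \<in> carrier_mat (length D) (length D)"
  by (simp add: Kmat_def gram_def)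

lemma Kmat_dims[simp]: "dim_row (Kmat k s2 D) = length D" "dim_col (Kmat k s2 D) = length D"
  by (simp_all add: Kmat_def gram_def)

lemma Kmat_idx: "i < length D \<Longrightarrow> j < length D \<Longrightarrow>
   Kmat k s2 D $$ (i,j) = k (D!i) (D!j) + (if i = j then s2 else 0)"
  by (simp add: Kmat_def gram_def)

lemma Kmat_mulv:
  assumes "i < length D" "w \<in> carrier_vec (length D)"
  shows "(Kmat k s2 D *\<^sub>v w) $ i = (\<Sum>j<length D. k (D!i) (D!j) * w $ j) + s2 * w $ i"
proof -
  have "(Kmat k s2 D *\<^sub>v w) $ i = (\<Sum>j<length D. Kmat k s2 D $$ (i,j) * w $ j)"
    using mulv_idx[of i "Kmat k s2 D" w] assms Kmat_carrier[of k s2 D] by auto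
  also have "\<dots> = (\<Sum>j<length D. k (D!i) (D!j) * w $ j + (if j = i then s2 * w $ i else 0))"
    using assms(1) by (intro sum.cong) (auto simp: Kmat_idx algebra_simps)
  also have "\<dots> = (\<Sum>j<length D. k (D!i) (D!j) * w $ j) + s2 * w $ i"
    using assms(1) by (simp add: sum.distrib)
  finally show ?thesis .
qed

lemma Kmat_inj:
  assumes psd: "psd_kernel X k" and s2: "s2 > 0" and D: "set D \<subseteq> X"
    and v: "v \<in> carrier_vec (length D)" and Kv: "Kmat k s2 D *\<^sub>v v = 0\<^sub>v (length D)"
  shows "v = 0\<^sub>v (length D)"
proof -
  let ?n = "length D"
  have "0 = (\<Sum>i<?n. v $ i * (Kmat k s2 D *\<^sub>v v) $ i)" using Kv by simp
  also have "\<dots> = (\<Sum>i<?n. v $ i * ((\<Sum>j<?n. k (D!i) (D!j) * v $ j) + s2 * v $ i))"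
    by (intro sum.cong refl) (simp only: lessThan_iff Kmat_mulv[OF _ v])
  also have "\<dots> = (\<Sum>i<?n. \<Sum>j<?n. v $ i * v $ j * k (D!i) (D!j)) + s2 * (\<Sum>i<?n. (v $ i)^2)"
    by (simp add: sum.distrib sum_distrib_left sum_distrib_right algebra_simps power2_eq_square)
  finally have eq: "(\<Sum>i<?n. \<Sum>j<?n. v $ i * v $ j * k (D!i) (D!j)) + s2 * (\<Sum>i<?n. (v $ i)^2) = 0" by simp
  have ge: "(\<Sum>i<?n. \<Sum>j<?n. v $ i * v $ j * k (D!i) (D!j)) \<ge> 0"
    using psd D unfolding psd_kernel_def by blast
  have "(\<Sum>i<?n. (v $ i)^2) \<ge> 0" by (simp add: sum_nonneg)
  moreover have "s2 * (\<Sum>i<?n. (v $ i)^2) \<le> 0" using eq ge by linarith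
  hence "(\<Sum>i<?n. (v $ i)^2) \<le> 0" using s2 by (simp add: mult_le_0_iff)
  ultimately have "(\<Sum>i<?n. (v $ i)^2) = 0" by linarith
  hence "\<forall>i\<in>{..<?n}. (v $ i)^2 = 0" by (subst (asm) sum_nonneg_eq_0_iff) auto
  thus ?thesis using v by (intro eq_vecI) auto
qed

lemma Kmat_inverse:
  assumes psd: "psd_kernel X k" and s2: "s2 > 0" and D: "set D \<subseteq> X"
  shows "\<exists>B. mat_inverse (Kmat k s2 D) = Some B \<and> Kmat k s2 D * B = 1\<^sub>m (length D)
           \<and> B * Kmat k s2 D = 1\<^sub>m (length D) \<and> B \<in> carrier_mat (length D) (length D)"
proof -
  have Kc: "Kmat k s2 D \<in> carrier_mat (length D) (length D)" by (rule Kmat_carrier)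
  have "det (Kmat k s2 D) \<noteq> 0"
  proof
    assume "det (Kmat k s2 D) = 0"
    then obtain v where "v \<in> carrier_vec (length D)" "v \<noteq> 0\<^sub>v (length D)" "Kmat k s2 D *\<^sub>v v = 0\<^sub>v (length D)"
      using det_0_iff_vec_prod_zero[OF Kc] by blast
    thus False using Kmat_inj[OF psd s2 D] by blast
  qed
  hence U: "Kmat k s2 D \<in> Units (ring_mat TYPE(real) (length D) undefined)"
    by (rule det_non_zero_imp_unit[OF Kc])
  show ?thesis
  proof (cases "mat_inverse (Kmat k s2 D)")
    case None thus ?thesis using mat_inverse(1)[OF Kc None, of undefined] U by blast
  next
    case (Some B) thus ?thesis using mat_inverse(2)[OF Kc Some] by blast
  qed
qed

lemma sys_exists:
  assumes psd: "psd_kernel X k" and s2: "s2 > 0" and D: "set D \<subseteq> X"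
  shows "\<exists>w \<in> carrier_vec (length D). \<forall>i<length D.
           (\<Sum>j<length D. k (D!i) (D!j) * w $ j) + s2 * w $ i = k (D!i) q"
proof -
  obtain B where B: "Kmat k s2 D * B = 1\<^sub>m (length D)" "B \<in> carrier_mat (length D) (length D)"
    using Kmat_inverse[OF psd s2 D] by blast
  define w where "w = B *\<^sub>v kvec k D q"
  have kc: "kvec k D q \<in> carrier_vec (length D)" by (simp add: kvec_def)
  have wc: "w \<in> carrier_vec (length D)" using B(2) kc unfolding w_def by (metis mult_mat_vec_carrier)
  have "Kmat k s2 D *\<^sub>v w = (Kmat k s2 D * B) *\<^sub>v kvec k D q"
    unfolding w_def by (rule assoc_mult_mat_vec[symmetric, OF Kmat_carrier B(2) kc])
  also have "\<dots> = kvec k D q" using B(1) kc by simp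
  finally have "Kmat k s2 D *\<^sub>v w = kvec k D q" .
  hence "\<forall>i<length D. (Kmat k s2 D *\<^sub>v w) $ i = k (D!i) q" by (simp add: kvec_def)
  thus ?thesis using wc Kmat_mulv[OF _ wc] by (intro bexI[of _ w]) auto
qed

lemma sys_char:
  assumes psd: "psd_kernel X k" and s2: "s2 > 0" and D: "set D \<subseteq> X"
    and wc: "w \<in> carrier_vec (length D)"
    and sys: "\<forall>i<length D. (\<Sum>j<length D. k (D!i) (D!j) * w $ j) + s2 * w $ i = k (D!i) q"
  shows "post_cov k s2 D p q = k p q - (\<Sum>i<length D. k (D!i) p * w $ i)"
proof -
  obtain B where B: "mat_inverse (Kmat k s2 D) = Some B" "B * Kmat k s2 D = 1\<^sub>m (length D)" "B \<in> carrier_mat (length D) (length D)"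
    using Kmat_inverse[OF psd s2 D] by blast
  have Kw: "Kmat k s2 D *\<^sub>v w = kvec k D q"
  proof (rule eq_vecI)
    fix i assume "i < dim_vec (kvec k D q)"
    hence i: "i < length D" by (simp add: kvec_def)
    have "(Kmat k s2 D *\<^sub>v w) $ i = k (D!i) q" using Kmat_mulv[OF i wc] sys i by simp
    thus "(Kmat k s2 D *\<^sub>v w) $ i = kvec k D q $ i" using i by (simp add: kvec_def)
  qed (simp add: kvec_def)
  have "B *\<^sub>v kvec k D q = (B * Kmat k s2 D) *\<^sub>v w"
    unfolding Kw[symmetric] by (rule assoc_mult_mat_vec[symmetric, OF B(3) Kmat_carrier wc])
  also have "\<dots> = w" using B(2) wc by simp
  finally have "B *\<^sub>v kvec k D q = w" .
  hence "post_cov k s2 D p q = k p q - kvec k D p \<bullet> w"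
    using B(1) by (simp add: post_cov_def Kmat_def[symmetric])
  also have "kvec k D p \<bullet> w = (\<Sum>i<length D. k (D!i) p * w $ i)"
    using wc by (simp add: scalar_prod_def kvec_def atLeast0LessThan)
  finally show ?thesis .
qed

lemma psd_sym: "psd_kernel X k \<Longrightarrow> x \<in> X \<Longrightarrow> y \<in> X \<Longrightarrow> k x y = k y x"
  unfolding psd_kernel_def by blast

lemma post_cov_snoc:
  assumes psd: "psd_kernel X k" and s2: "s2 > 0" and D0: "set D0 \<subseteq> X" and d: "d \<in> X"
    and p: "p \<in> X" and \<beta>: "post_cov k s2 D0 d d + s2 \<noteq> 0"
  shows "post_cov k s2 (D0 @ [d]) p q = post_cov k s2 D0 p q
           - post_cov k s2 D0 p d * post_cov k s2 D0 d q / (post_cov k s2 D0 d d + s2)"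
proof -
  let ?m = "length D0"
  define \<beta> where "\<beta> = post_cov k s2 D0 d d + s2"
  obtain uq where uqc: "uq \<in> carrier_vec ?m" and
    sq: "\<forall>i<?m. (\<Sum>j<?m. k (D0!i) (D0!j) * uq $ j) + s2 * uq $ i = k (D0!i) q"
    using sys_exists[OF psd s2 D0] by blast
  obtain ud where udc: "ud \<in> carrier_vec ?m" and
    sd: "\<forall>i<?m. (\<Sum>j<?m. k (D0!i) (D0!j) * ud $ j) + s2 * ud $ i = k (D0!i) d"
    using sys_exists[OF psd s2 D0] by blast
  have Ppq: "post_cov k s2 D0 p q = k p q - (\<Sum>i<?m. k (D0!i) p * uq $ i)"
    by (rule sys_char[OF psd s2 D0 uqc sq])
  have Ppd: "post_cov k s2 D0 p d = k p d - (\<Sum>i<?m. k (D0!i) p * ud $ i)"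
    by (rule sys_char[OF psd s2 D0 udc sd])
  have Pdq: "post_cov k s2 D0 d q = k d q - (\<Sum>i<?m. k (D0!i) d * uq $ i)"
    by (rule sys_char[OF psd s2 D0 uqc sq])
  have Pdd: "post_cov k s2 D0 d d = k d d - (\<Sum>i<?m. k (D0!i) d * ud $ i)"
    by (rule sys_char[OF psd s2 D0 udc sd])
  define c where "c = post_cov k s2 D0 d q / \<beta>"
  define w where "w = vec (Suc ?m) (\<lambda>i. if i < ?m then uq $ i - c * ud $ i else c)"
  have wc: "w \<in> carrier_vec (length (D0 @ [d]))" by (simp add: w_def)
  have D: "set (D0 @ [d]) \<subseteq> X" using D0 d by auto
  have sys: "\<forall>i<length (D0 @ [d]). (\<Sum>j<length (D0 @ [d]). k ((D0 @ [d])!i) ((D0 @ [d])!j) * w $ j)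
      + s2 * w $ i = k ((D0 @ [d])!i) q"
  proof (intro allI impI)
    fix i assume "i < length (D0 @ [d])"
    hence i: "i < Suc ?m" by simp
    have split: "(\<Sum>j<length (D0 @ [d]). k ((D0 @ [d])!i) ((D0 @ [d])!j) * w $ j)
       = (\<Sum>j<?m. k ((D0 @ [d])!i) (D0!j) * uq $ j) - c * (\<Sum>j<?m. k ((D0 @ [d])!i) (D0!j) * ud $ j)
         + k ((D0 @ [d])!i) d * c"
      by (simp add: w_def nth_append sum_distrib_left sum_subtractf algebra_simps)
    show "(\<Sum>j<length (D0 @ [d]). k ((D0 @ [d])!i) ((D0 @ [d])!j) * w $ j)
      + s2 * w $ i = k ((D0 @ [d])!i) q"
    proof (cases "i < ?m")
      case True
      have Di: "(D0 @ [d])!i = D0!i" using True by (simp add: nth_append)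
      have wi: "w $ i = uq $ i - c * ud $ i" using True by (simp add: w_def)
      have e1: "(\<Sum>j<?m. k (D0!i) (D0!j) * uq $ j) + s2 * uq $ i = k (D0!i) q" using sq True by blast
      have e2: "(\<Sum>j<?m. k (D0!i) (D0!j) * ud $ j) + s2 * ud $ i = k (D0!i) d" using sd True by blast
      have e3: "k (D0!i) d * c = c * (\<Sum>j<?m. k (D0!i) (D0!j) * ud $ j) + c * s2 * ud $ i"
        unfolding e2[symmetric] by (simp add: algebra_simps)
      have e4: "s2 * (uq $ i - c * ud $ i) = s2 * uq $ i - c * s2 * ud $ i" by (simp add: algebra_simps)
      show ?thesis unfolding split unfolding Di wi using e1 e3 e4 by linarith
    next
      case False
      hence im: "i = ?m" using i by simp
      have sym1: "(\<Sum>j<?m. k d (D0!j) * uq $ j) = (\<Sum>j<?m. k (D0!j) d * uq $ j)"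
        using psd_sym[OF psd] D0 d by (intro sum.cong refl) (metis nth_mem subsetD lessThan_iff)
      have sym2: "(\<Sum>j<?m. k d (D0!j) * ud $ j) = (\<Sum>j<?m. k (D0!j) d * ud $ j)"
        using psd_sym[OF psd] D0 d by (intro sum.cong refl) (metis nth_mem subsetD lessThan_iff)
      have "c * \<beta> = post_cov k s2 D0 d q" using \<beta> by (simp add: c_def \<beta>_def)
      hence cb: "c * (k d d - (\<Sum>i<?m. k (D0!i) d * ud $ i) + s2) = k d q - (\<Sum>i<?m. k (D0!i) d * uq $ i)"
        using Pdd Pdq by (simp add: \<beta>_def)
      have wm: "w $ ?m = c" by (simp add: w_def)
      have Dm: "(D0 @ [d]) ! ?m = d" by simp
      have e5: "c * (k d d - (\<Sum>i<?m. k (D0!i) d * ud $ i) + s2) = c * k d d - c * (\<Sum>i<?m. k (D0!i) d * ud $ i) + c * s2"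
        by (simp add: algebra_simps)
      have e6: "k d d * c = c * k d d" by simp
      have e7: "s2 * c = c * s2" by simp
      show ?thesis unfolding split unfolding im wm Dm sym1 sym2 using cb e5 e6 e7 by linarith
    qed
  qed
  have "post_cov k s2 (D0 @ [d]) p q = k p q - (\<Sum>i<length (D0 @ [d]). k ((D0 @ [d])!i) p * w $ i)"
    by (rule sys_char[OF psd s2 D wc sys])
  also have "(\<Sum>i<length (D0 @ [d]). k ((D0 @ [d])!i) p * w $ i)
     = (\<Sum>i<?m. k (D0!i) p * uq $ i) - c * (\<Sum>i<?m. k (D0!i) p * ud $ i) + k d p * c"
    by (simp add: w_def nth_append sum_distrib_left sum_subtractf algebra_simps)
  also have "k d p = k p d" using psd_sym[OF psd d p] .
  finally have "post_cov k s2 (D0 @ [d]) p q = post_cov k s2 D0 p q - c * post_cov k s2 D0 p d"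
    unfolding Ppq Ppd by (simp add: algebra_simps)
  thus ?thesis by (simp add: c_def \<beta>_def)
qed

lemma post_cov_Nil:
  assumes psd: "psd_kernel X k" and s2: "s2 > 0"
  shows "post_cov k s2 [] p q = k p q"
  using sys_char[OF psd s2, of "[]" "vec 0 (\<lambda>_. 0)" q p] by simp

lemma psd_quad:
  assumes psd: "psd_kernel X K" and P: "set P \<subseteq> X" and d: "d \<in> X"
  shows "(\<Sum>i<length P. \<Sum>j<length P. c i * c j * K (P!i) (P!j))
           - 2 * l * (\<Sum>i<length P. c i * K (P!i) d) + l^2 * K d d \<ge> 0"
proof -
  let ?n = "length P"
  define c' where "c' = (\<lambda>i. if i < ?n then c i else - l)"
  have "set (P @ [d]) \<subseteq> X" using P d by auto
  hence ge: "(\<Sum>i<length (P@[d]). \<Sum>j<length (P@[d]). c' i * c' j * K ((P@[d])!i) ((P@[d])!j)) \<ge> 0"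
    using psd unfolding psd_kernel_def by blast
  have sym: "(\<Sum>j<?n. c j * K d (P!j)) = (\<Sum>i<?n. c i * K (P!i) d)"
    using psd d P unfolding psd_kernel_def by (intro sum.cong refl) (metis nth_mem subsetD lessThan_iff)
  have "(\<Sum>i<length (P@[d]). \<Sum>j<length (P@[d]). c' i * c' j * K ((P@[d])!i) ((P@[d])!j))
     = (\<Sum>i<?n. (\<Sum>j<?n. c i * c j * K (P!i) (P!j)) - l * (c i * K (P!i) d))
       - l * (\<Sum>j<?n. c j * K d (P!j)) + l^2 * K d d"
  proof -
    have row: "(\<Sum>j<Suc ?n. c' i * c' j * K ((P@[d])!i) ((P@[d])!j))
       = (\<Sum>j<?n. c i * c j * K (P!i) (P!j)) - l * (c i * K (P!i) d)" if i: "i < ?n" for i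
      using i by (simp add: c'_def nth_append)
    have "(\<Sum>j<Suc ?n. c' ?n * c' j * K ((P@[d])!?n) ((P@[d])!j))
       = (\<Sum>j<?n. (- l) * (c j * K d (P!j))) + l^2 * K d d"
      by (simp add: c'_def nth_append power2_eq_square mult.assoc)
    also have "\<dots> = - l * (\<Sum>j<?n. c j * K d (P!j)) + l^2 * K d d"
      by (simp only: sum_distrib_left[symmetric])
    finally have last: "(\<Sum>j<Suc ?n. c' ?n * c' j * K ((P@[d])!?n) ((P@[d])!j))
       = - l * (\<Sum>j<?n. c j * K d (P!j)) + l^2 * K d d" .
    show ?thesis using row last by simp
  qed
  also have "(\<Sum>i<?n. (\<Sum>j<?n. c i * c j * K (P!i) (P!j)) - l * (c i * K (P!i) d))
     = (\<Sum>i<?n. \<Sum>j<?n. c i * c j * K (P!i) (P!j)) - l * (\<Sum>i<?n. c i * K (P!i) d)"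
    by (simp add: sum_subtractf sum_distrib_left)
  finally have "(\<Sum>i<length (P@[d]). \<Sum>j<length (P@[d]). c' i * c' j * K ((P@[d])!i) ((P@[d])!j))
     = (\<Sum>i<?n. \<Sum>j<?n. c i * c j * K (P!i) (P!j)) - l * (\<Sum>i<?n. c i * K (P!i) d)
       - l * (\<Sum>i<?n. c i * K (P!i) d) + l^2 * K d d" unfolding sym .
  thus ?thesis using ge by simp
qed

lemma psd_diag: "psd_kernel X K \<Longrightarrow> d \<in> X \<Longrightarrow> K d d \<ge> 0"
  using psd_quad[of X K "[]" d "\<lambda>_. 0" 1] by simp

lemma psd_cs:
  assumes psd: "psd_kernel X K" and x: "x \<in> X" and a: "a \<in> X"
  shows "(K x a)^2 \<le> K x x * K a a"
proof -
  have q: "K x x - 2 * l * K x a + l^2 * K a a \<ge> 0" for l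
    using psd_quad[OF psd _ a, of "[x]" "\<lambda>_. 1" l] x by simp
  have aa: "K a a \<ge> 0" using psd_diag[OF psd a] .
  show ?thesis
  proof (cases "K a a = 0")
    case True
    show ?thesis
    proof (rule ccontr)
      assume "\<not> ?thesis"
      hence ne: "K x a \<noteq> 0" using True by simp
      have "K x x - 2 * ((K x x + 1) / (2 * K x a)) * K x a \<ge> 0" using q[of "(K x x + 1) / (2 * K x a)"] True by simp
      thus False using ne by (simp add: field_simps)
    qed
  next
    case False
    hence pos: "K a a > 0" using aa by simp
    have "K x x - 2 * (K x a / K a a) * K x a + (K x a / K a a)^2 * K a a \<ge> 0" by (rule q)
    hence "K x x - (K x a)^2 / K a a \<ge> 0" using pos by (simp add: field_simps power2_eq_square)
    thus ?thesis using pos by (simp add: field_simps)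
  qed
qed

lemma post_cov_psd:
  assumes psd: "psd_kernel X k" and s2: "s2 > 0" and D: "set D \<subseteq> X"
  shows "psd_kernel X (post_cov k s2 D)"
  using D
proof (induction D rule: rev_induct)
  case Nil
  thus ?case using psd post_cov_Nil[OF psd s2] by simp
next
  case (snoc d D0)
  have D0: "set D0 \<subseteq> X" and d: "d \<in> X" using snoc.prems by auto
  let ?P = "post_cov k s2 D0"
  have IH: "psd_kernel X ?P" using snoc.IH D0 by simp
  define \<beta> where "\<beta> = ?P d d + s2"
  have \<beta>pos: "\<beta> > 0" using psd_diag[OF IH d] s2 by (simp add: \<beta>_def)
  have upd: "post_cov k s2 (D0 @ [d]) p q = ?P p q - ?P p d * ?P d q / \<beta>" if "p \<in> X" for p q
    using post_cov_snoc[OF psd s2 D0 d that] \<beta>pos by (simp add: \<beta>_def)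
  have symP: "\<And>x y. x \<in> X \<Longrightarrow> y \<in> X \<Longrightarrow> ?P x y = ?P y x" using IH unfolding psd_kernel_def by blast
  show ?case unfolding psd_kernel_def
  proof (intro conjI ballI allI impI)
    fix x y assume x: "x \<in> X" and y: "y \<in> X"
    show "post_cov k s2 (D0 @ [d]) x y = post_cov k s2 (D0 @ [d]) y x"
      using upd[OF x] upd[OF y] symP[OF x y] symP[OF x d] symP[OF y d] by simp
  next
    fix P :: "'a list" and c assume P: "set P \<subseteq> X"
    let ?n = "length P"
    define S where "S = (\<Sum>i<?n. c i * ?P (P!i) d)"
    define Q where "Q = (\<Sum>i<?n. \<Sum>j<?n. c i * c j * ?P (P!i) (P!j))"
    have Pi: "i < ?n \<Longrightarrow> P ! i \<in> X" for i using P by auto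
    have "(\<Sum>i<?n. \<Sum>j<?n. c i * c j * post_cov k s2 (D0 @ [d]) (P!i) (P!j))
        = (\<Sum>i<?n. \<Sum>j<?n. c i * c j * ?P (P!i) (P!j) - (c i * ?P (P!i) d) * (c j * ?P (P!j) d) / \<beta>)"
      by (intro sum.cong refl) (simp add: upd Pi symP[OF Pi d] algebra_simps)
    also have "\<dots> = Q - (\<Sum>i<?n. \<Sum>j<?n. (c i * ?P (P!i) d) * (c j * ?P (P!j) d) / \<beta>)"
      by (simp add: Q_def sum_subtractf)
    also have "(\<Sum>i<?n. \<Sum>j<?n. (c i * ?P (P!i) d) * (c j * ?P (P!j) d) / \<beta>) = S^2 / \<beta>"
    proof -
      have "S^2 / \<beta> = (\<Sum>i<?n. \<Sum>j<?n. (c i * ?P (P!i) d) * (c j * ?P (P!j) d)) / \<beta>"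
        by (simp add: power2_eq_square S_def sum_product)
      also have "\<dots> = (\<Sum>i<?n. \<Sum>j<?n. (c i * ?P (P!i) d) * (c j * ?P (P!j) d) / \<beta>)"
        by (simp add: sum_divide_distrib)
      finally show ?thesis by simp
    qed
    finally have eq: "(\<Sum>i<?n. \<Sum>j<?n. c i * c j * post_cov k s2 (D0 @ [d]) (P!i) (P!j)) = Q - S^2 / \<beta>" .
    have q: "Q - 2 * (S / \<beta>) * S + (S / \<beta>)^2 * ?P d d \<ge> 0"
      using psd_quad[OF IH P d, of c "S / \<beta>"] by (simp add: Q_def S_def)
    have "(S / \<beta>)^2 * ?P d d \<le> (S / \<beta>)^2 * \<beta>" by (intro mult_left_mono) (use s2 in \<open>auto simp: \<beta>_def\<close>)
    also have "\<dots> = S^2 / \<beta>" using \<beta>pos by (simp add: power2_eq_square field_simps)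
    finally have b: "(S / \<beta>)^2 * ?P d d \<le> S^2 / \<beta>" .
    have "2 * (S / \<beta>) * S = 2 * (S^2 / \<beta>)" by (simp add: power2_eq_square)
    hence "Q - S^2 / \<beta> \<ge> 0" using q b by linarith
    thus "(\<Sum>i<?n. \<Sum>j<?n. c i * c j * post_cov k s2 (D0 @ [d]) (P!i) (P!j)) \<ge> 0" using eq by simp
  qed
qed

definition Nm :: "('a \<Rightarrow> 'a \<Rightarrow> real) \<Rightarrow> real \<Rightarrow> 'a list \<Rightarrow> 'a list \<Rightarrow> real mat" where
  "Nm k s2 D A = 1\<^sub>m (length A) + (1 / s2) \<cdot>\<^sub>m
          mat (length A) (length A) (\<lambda>(i,j). post_cov k s2 D (A ! i) (A ! j))"

lemma Nm_Cons:
  assumes psd: "psd_kernel X k" and s2: "s2 > 0" and D: "set D \<subseteq> X" and a: "a \<in> X"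
    and A: "set A \<subseteq> X"
  shows "det (Nm k s2 D (a # A)) = ((post_cov k s2 D a a + s2) / s2) * det (Nm k s2 (D @ [a]) A)"
proof -
  let ?P = "post_cov k s2 D"
  let ?n = "length A"
  define f where "f = (\<lambda>(i,j). (if i = j then 1 else 0) + ?P ((a#A)!i) ((a#A)!j) / s2)"
  have PD: "psd_kernel X ?P" by (rule post_cov_psd[OF psd s2 D])
  have \<beta>pos: "?P a a + s2 > 0" using psd_diag[OF PD a] s2 by simp
  have eq1: "Nm k s2 D (a # A) = mat (Suc ?n) (Suc ?n) f"
    by (rule eq_matI) (auto simp: Nm_def f_def)
  have f00: "f (0,0) = (?P a a + s2) / s2" using s2 by (simp add: f_def field_simps)
  hence f00nz: "f (0,0) \<noteq> 0" using \<beta>pos s2 by simp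
  have eq2: "mat ?n ?n (\<lambda>(i,j). f (Suc i, Suc j) - f (Suc i, 0) * f (0, Suc j) / f (0,0)) = Nm k s2 (D @ [a]) A"
  proof (rule eq_matI)
    fix i j assume "i < dim_row (Nm k s2 (D @ [a]) A)" "j < dim_col (Nm k s2 (D @ [a]) A)"
    hence i: "i < ?n" and j: "j < ?n" by (auto simp: Nm_def)
    have Ai: "A ! i \<in> X" using i A by auto
    have Aj: "A ! j \<in> X" using j A by auto
    have upd: "post_cov k s2 (D @ [a]) (A!i) (A!j) = ?P (A!i) (A!j) - ?P (A!i) a * ?P a (A!j) / (?P a a + s2)"
      using post_cov_snoc[OF psd s2 D a Ai] \<beta>pos by simp
    show "mat ?n ?n (\<lambda>(i,j). f (Suc i, Suc j) - f (Suc i, 0) * f (0, Suc j) / f (0,0)) $$ (i,j) = Nm k s2 (D @ [a]) A $$ (i,j)"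
    proof -
      have e1: "f (Suc i, Suc j) = (if i = j then 1 else 0) + ?P (A!i) (A!j) / s2" by (simp add: f_def)
      have e2: "f (Suc i, 0) = ?P (A!i) a / s2" by (simp add: f_def)
      have e3: "f (0, Suc j) = ?P a (A!j) / s2" by (simp add: f_def)
      have e4: "Nm k s2 (D @ [a]) A $$ (i,j) = (if i = j then 1 else 0) + (1/s2) * post_cov k s2 (D @ [a]) (A!i) (A!j)"
        using i j by (simp add: Nm_def)
      have alg: "e + p / s2 - (u / s2) * (v / s2) / ((b + s2) / s2) = e + (1/s2) * (p - u * v / (b + s2))"
        if h: "b + s2 > 0" for e p u v b
      proof -
        have "(u / s2) * (v / s2) / ((b + s2) / s2) = (u * v) / (s2 * (b + s2))" using h s2 by (simp add: divide_simps)
        moreover have "(1/s2) * (p - u * v / (b + s2)) = p / s2 - (u * v) / (s2 * (b + s2))" using h s2 by (simp add: divide_simps right_diff_distrib)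
        ultimately show ?thesis by simp
      qed
      have "f (Suc i, Suc j) - f (Suc i, 0) * f (0, Suc j) / f (0,0) = Nm k s2 (D @ [a]) A $$ (i,j)"
        unfolding e4 upd e1 e2 e3 f00 by (rule alg[OF \<beta>pos])
      thus ?thesis using i j by simp
    qed
  qed (auto simp: Nm_def)
  show ?thesis unfolding eq1 schur_first[of f, OF f00nz] eq2 by (simp only: f00)
qed

lemma main_ind:
  assumes psd: "psd_kernel X k" and s2: "s2 > 0" and x: "x \<in> X"
  shows "set D \<subseteq> X \<Longrightarrow> set A \<subseteq> X \<Longrightarrow>
    det (Nm k s2 D A) \<ge> 1 \<and> post_cov k s2 D x x \<le> det (Nm k s2 D A) * post_cov k s2 (D @ A) x x"
proof (induction A arbitrary: D)
  case Nil
  have "Nm k s2 D [] = 1\<^sub>m 0" by (rule eq_matI) (auto simp: Nm_def)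
  hence "det (Nm k s2 D []) = 1" by simp
  thus ?case by simp
next
  case (Cons a A)
  have a: "a \<in> X" and A: "set A \<subseteq> X" using Cons.prems by auto
  have Da: "set (D @ [a]) \<subseteq> X" using Cons.prems by auto
  from Cons.IH[OF Da A] have IH1: "det (Nm k s2 (D @ [a]) A) \<ge> 1"
    and IH2: "post_cov k s2 (D @ [a]) x x \<le> det (Nm k s2 (D @ [a]) A) * post_cov k s2 (D @ a # A) x x"
    by auto
  let ?P = "post_cov k s2 D"
  define \<beta> where "\<beta> = ?P a a + s2"
  have PD: "psd_kernel X ?P" by (rule post_cov_psd[OF psd s2 Cons.prems(1)])
  have aa: "?P a a \<ge> 0" by (rule psd_diag[OF PD a])
  have \<beta>pos: "\<beta> > 0" using aa s2 by (simp add: \<beta>_def)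
  have fac: "\<beta> / s2 \<ge> 1" using aa s2 by (simp add: \<beta>_def field_simps)
  have detN: "det (Nm k s2 D (a # A)) = (\<beta> / s2) * det (Nm k s2 (D @ [a]) A)"
    unfolding \<beta>_def by (rule Nm_Cons[OF psd s2 Cons.prems(1) a A])
  have upd: "post_cov k s2 (D @ [a]) x x = ?P x x - ?P x a * ?P a x / \<beta>"
    using post_cov_snoc[OF psd s2 Cons.prems(1) a x] \<beta>pos by (simp add: \<beta>_def)
  have sym: "?P a x = ?P x a" using PD a x unfolding psd_kernel_def by blast
  have cs: "(?P x a)^2 \<le> ?P x x * ?P a a" by (rule psd_cs[OF PD x a])
  have step: "?P x x \<le> (\<beta> / s2) * post_cov k s2 (D @ [a]) x x"
  proof -
    have "(\<beta> / s2) * post_cov k s2 (D @ [a]) x x = (\<beta> * ?P x x - (?P x a)^2) / s2"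
      unfolding upd sym using \<beta>pos s2 by (simp add: field_simps power2_eq_square)
    also have "\<dots> = ?P x x + (?P x x * ?P a a - (?P x a)^2) / s2"
      using s2 by (simp add: \<beta>_def field_simps)
    also have "\<dots> \<ge> ?P x x" using cs s2 by simp
    finally show ?thesis .
  qed
  also have "\<dots> \<le> (\<beta> / s2) * (det (Nm k s2 (D @ [a]) A) * post_cov k s2 (D @ a # A) x x)"
    using IH2 fac by (intro mult_left_mono) auto
  finally have "?P x x \<le> det (Nm k s2 D (a # A)) * post_cov k s2 (D @ a # A) x x"
    unfolding detN by (simp add: mult.assoc)
  moreover have "det (Nm k s2 D (a # A)) \<ge> 1"
  proof -
    have "1 * 1 \<le> (\<beta> / s2) * det (Nm k s2 (D @ [a]) A)"
      by (rule mult_mono) (use fac IH1 in auto)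
    thus ?thesis unfolding detN by simp
  qed
  ultimately show ?case by simp
qed

theorem lemma5:
  fixes X :: "'a::real_normed_vector set"
    and k :: "'a \<Rightarrow> 'a \<Rightarrow> real"
    and \<sigma> :: real and B :: nat and C :: real
    and xs :: "nat \<Rightarrow> 'a" and fb :: "nat \<Rightarrow> nat"
  assumes "finite X"
    and "\<forall>x\<in>X. norm x \<le> 1"
    and "psd_kernel X k"
    and "\<sigma> > 0"
    and "B \<ge> 1"
    and "\<forall>t\<ge>1. xs t \<in> X"
    and "\<forall>t\<ge>1. fb t < t \<and> t - fb t \<le> B"
    and "\<forall>t\<ge>1. \<forall>A. set A \<subseteq> X \<and> length A \<le> B - 1 \<longrightarrow>
            cond_mi k (\<sigma>\<^sup>2) A (queries xs (fb t)) \<le> C"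
  shows "\<forall>t\<ge>1. \<forall>x\<in>X.
           post_sd k (\<sigma>\<^sup>2) (queries xs (fb t)) x / post_sd k (\<sigma>\<^sup>2) (queries xs (t - 1)) x \<le> exp C"
proof (intro allI impI ballI)
  fix t :: nat and x assume t: "t \<ge> 1" and x: "x \<in> X"
  note psd = assms(3)
  define s2 where "s2 = \<sigma>\<^sup>2"
  have s2: "s2 > 0" using assms(4) by (simp add: s2_def)
  define D where "D = queries xs (fb t)"
  define A where "A = map xs [Suc (fb t)..<t]"
  have fbt: "fb t < t" "t - fb t \<le> B" using assms(7) t by auto
  have DA: "queries xs (t - 1) = D @ A"
  proof -
    have "[1..<Suc (fb t)] @ [Suc (fb t)..<t] = [1..<t]"
      using fbt upt_add_eq_append[of 1 "Suc (fb t)" "t - Suc (fb t)"] by simp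
    moreover have "Suc (t - 1) = t" using t by simp
    ultimately show ?thesis unfolding D_def A_def queries_def by (metis map_append)
  qed
  have Dx: "set D \<subseteq> X" using assms(6) by (auto simp: D_def queries_def)
  have Ax: "set A \<subseteq> X" using assms(6) by (auto simp: A_def)
  have lenA: "length A \<le> B - 1" using fbt by (simp add: A_def)
  have mi: "cond_mi k s2 A D \<le> C" using assms(8) t Ax lenA by (simp add: D_def s2_def)
  have mi_eq: "cond_mi k s2 A D = ln (det (Nm k s2 D A)) / 2"
    by (simp add: cond_mi_def Nm_def)
  from main_ind[OF psd s2 x Dx Ax] have det1: "det (Nm k s2 D A) \<ge> 1"
    and ineq: "post_cov k s2 D x x \<le> det (Nm k s2 D A) * post_cov k s2 (D @ A) x x" by auto
  have "det (Nm k s2 D A) = exp (2 * cond_mi k s2 A D)" using det1 by (simp add: mi_eq)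
  also have "\<dots> \<le> exp (2 * C)" using mi by simp
  finally have detle: "det (Nm k s2 D A) \<le> exp (2 * C)" .
  have DAx: "set (D @ A) \<subseteq> X" using Dx Ax by auto
  have P2: "post_cov k s2 (D @ A) x x \<ge> 0"
    by (rule psd_diag[OF post_cov_psd[OF psd s2 DAx] x])
  show "post_sd k (\<sigma>\<^sup>2) (queries xs (fb t)) x / post_sd k (\<sigma>\<^sup>2) (queries xs (t - 1)) x \<le> exp C"
  proof (cases "post_cov k s2 (D @ A) x x = 0")
    case True
    thus ?thesis unfolding post_sd_def DA D_def[symmetric] s2_def[symmetric] by simp
  next
    case False
    hence pos: "post_cov k s2 (D @ A) x x > 0" using P2 by simp
    have "post_cov k s2 D x x \<le> exp (2 * C) * post_cov k s2 (D @ A) x x"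
      using ineq detle pos by (meson mult_right_mono less_imp_le order_trans)
    hence "sqrt (post_cov k s2 D x x) \<le> sqrt (exp (2 * C) * post_cov k s2 (D @ A) x x)"
      by (rule real_sqrt_le_mono)
    also have "\<dots> = exp C * sqrt (post_cov k s2 (D @ A) x x)"
    proof -
      have "exp (2 * C) = (exp C)^2" by (simp add: exp_double[symmetric] power2_eq_square mult_exp_exp)
      thus ?thesis by (simp add: real_sqrt_mult)
    qed
    finally have "sqrt (post_cov k s2 D x x) / sqrt (post_cov k s2 (D @ A) x x) \<le> exp C"
      using pos by (simp add: divide_le_eq)
    thus ?thesis unfolding post_sd_def DA D_def[symmetric] s2_def[symmetric] by simp
  qed
qed

end
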